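(* Let $X,Y,Z,W$ be Banach spaces, $F:X\times Y\rightrightarrows Z$ a multifunction, $g:W\to Z$ a function, and $(\overline{x},\overline{y},\overline{z},\overline{w})\in X\times Y\times Z\times W$ with $\overline{z}:=-g(\overline{w})\in F(\overline{x},\overline{y})$. Define $\Gamma:Y\times W\rightrightarrows X$ by $\Gamma(y,w)=\{x\in X: 0\in F(x,y)+g(w)\}$. Suppose: (i) $F$ is Lipschitz-like with respect to $y$ uniformly in $x$ around $((\overline{x},\overline{y}),\overline{z})$ with constant $\eta\ge0$; (ii) $F$ is metrically regular with respect to $x$ uniformly in $y$ around $((\overline{x},\overline{y}),\overline{z})$ with constant $k>0$; (iii) $F(\cdot,y)$ is inner semicontinuous at $(\overline{x},\overline{z})$ for every $y$ in a neighborhood of $\overline{y}$; (iv) $g$ is locally Lipschitz around $\overline{w}$ with constant $\lambda$. Then there exists $\alpha>0$ such that for every $(y,w),(y',w')\in D(\overline{y},\alpha)\times D(\overline{w},\alpha)$ and every $\varepsilon>0$, \[ \Gamma(y',w')\cap D(\overline{x},\alpha)\subset\Gamma(y,w)+(k+\varepsilon)(\eta\|y-y'\|+\lambda\|w-w'\|)\mathbb{D}_X. \] In particular, $\Gamma$ is Lipschitz-like around $((\overline{y},\overline{w}),\overline{x})$ and \[ \operatorname{lip}\Gamma((\overline{y},\overline{w}),\overline{x})\le\widehat{\operatorname{reg}}_xF((\overline{x},\overline{y}),\overline{z})\cdot\max\{\widehat{\operatorname{lip}}_yF((\overline{x},\overline{y}),\overline{z}),\operatorname{lip}g(\overline{w})\}.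 \]
   Context: $B(x,r)$ and $D(x,r)$ are the open and closed balls, $\mathbb{D}_X$ the closed unit ball, $d(x,\emptyset)=\infty$; products carry the sum norm. For $F:X\times Y\rightrightarrows Z$ write $F_y=F(\cdot,y)$, $F_x=F(x,\cdot)$. $F$ is Lipschitz-like with respect to $y$ uniformly in $x$ around $((\overline{x},\overline{y}),\overline{z})$ with constant $L$ if there are neighborhoods $U$ of $\overline{x}$, $V$ of $\overline{y}$, $W_0$ of $\overline{z}$ with $F(x,y)\cap W_0\subset F(x,y')+L\|y-y'\|\mathbb{D}_Z$ for all $x\in U$, $y,y'\in V$; $\widehat{\operatorname{lip}}_yF((\overline{x},\overline{y}),\overline{z})$ is the infimum of such $L$. $F$ is metrically regular with respect to $x$ uniformly in $y$ around $((\overline{x},\overline{y}),\overline{z})$ with constant $L$ if there are such neighborhoods with $d(x,F_y^{-1}(z))\le L\,d(z,F_y(x))$ for all $(x,y,z)\in U\times V\times W_0$; $\widehat{\operatorname{reg}}_xF((\overline{x},\overline{y}),\overline{z})$ is the infimum of such $L$. A multifunction $T$ is inner semicontinuous at $(a,b)\in\operatorname{Gr}T$ if for every open $D\ni b$ there is a neighborhood $U$ of $a$ with $T(a')\cap D\ne\emptyset$ for all $a'\in U$. $T:A\rightrightarrows B$ is Lipschitz-like around $(\overline{a},\overline{b})$ with constant $L$ if there are neighborhoods $U$ of $\overline{a}$, $V$ of $\overline{b}$ with $T(a)\cap V\subset T(u)+L\|a-u\|\mathbb{D}_B$ for all $a,u\in U$; $\operatorname{lip}T(\overline{a},\overline{b})$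 is the infimum of such $L$; for a function $g$, $\operatorname{lip}g(\overline{w})$ is the infimum of Lipschitz constants of $g$ on neighborhoods of $\overline{w}$. *)

theory Defs
  imports "HOL-Analysis.Analysis"
begin

text \<open>Multifunctions F : X x Y =>> Z are modelled as F :: 'x => 'y => 'z set.
  The inclusion  A \<subseteq> B + r D  (r \<ge> 0, D the closed unit ball) is written
  A \<subseteq> (\<Union>b\<in>B. cball b r).\<close>

definition lip_like_y ::
  "('x::real_normed_vector \<Rightarrow> 'y::real_normed_vector \<Rightarrow> 'z::real_normed_vector set)
    \<Rightarrow> 'x \<Rightarrow> 'y \<Rightarrow> 'z \<Rightarrow> real \<Rightarrow> bool" where
  "lip_like_y F xb yb zb L \<longleftrightarrow>
     (\<exists>U V W0. open U \<and> xb \<in> U \<and> open V \<and> yb \<in> V \<and> open W0 \<and> zb \<in> W0 \<and>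
        (\<forall>x\<in>U. \<forall>y\<in>V. \<forall>y'\<in>V. F x y \<inter> W0 \<subseteq> (\<Union>z\<in>F x y'. cball z (L * norm (y - y')))))"

definition lip_hat_y ::
  "('x::real_normed_vector \<Rightarrow> 'y::real_normed_vector \<Rightarrow> 'z::real_normed_vector set)
    \<Rightarrow> 'x \<Rightarrow> 'y \<Rightarrow> 'z \<Rightarrow> real" where
  "lip_hat_y F xb yb zb = Inf {L. L \<ge> 0 \<and> lip_like_y F xb yb zb L}"

text \<open>Metric regularity with respect to x uniformly in y, with constant L:
  d(x, F_y^{-1}(z)) \<le> L d(z, F_y(x)), with the convention d(.,{}) = \<infinity>
  (so the inequality is trivial when F_y(x) is empty, and forces F_y^{-1}(z)
  to be nonempty otherwise).\<close>
definition metreg_x ::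
  "('x::real_normed_vector \<Rightarrow> 'y::real_normed_vector \<Rightarrow> 'z::real_normed_vector set)
    \<Rightarrow> 'x \<Rightarrow> 'y \<Rightarrow> 'z \<Rightarrow> real \<Rightarrow> bool" where
  "metreg_x F xb yb zb L \<longleftrightarrow>
     (\<exists>U V W0. open U \<and> xb \<in> U \<and> open V \<and> yb \<in> V \<and> open W0 \<and> zb \<in> W0 \<and>
        (\<forall>x\<in>U. \<forall>y\<in>V. \<forall>z\<in>W0. F x y \<noteq> {} \<longrightarrow>
            ({u. z \<in> F u y} \<noteq> {} \<and>
             infdist x {u. z \<in> F u y} \<le> L * infdist z (F x y))))"

definition reg_hat_x ::
  "('x::real_normed_vector \<Rightarrow> 'y::real_normed_vector \<Rightarrow> 'z::real_normed_vector set)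
    \<Rightarrow> 'x \<Rightarrow> 'y \<Rightarrow> 'z \<Rightarrow> real" where
  "reg_hat_x F xb yb zb = Inf {L. L \<ge> 0 \<and> metreg_x F xb yb zb L}"

definition inner_sc :: "('a::topological_space \<Rightarrow> 'b::topological_space set) \<Rightarrow> 'a \<Rightarrow> 'b \<Rightarrow> bool" where
  "inner_sc T a b \<longleftrightarrow>
     (\<forall>D. open D \<and> b \<in> D \<longrightarrow> (\<exists>U. open U \<and> a \<in> U \<and> (\<forall>a'\<in>U. T a' \<inter> D \<noteq> {})))"

definition sum_dist :: "('a::real_normed_vector \<times> 'b::real_normed_vector) \<Rightarrow> 'a \<times> 'b \<Rightarrow> real" where
  "sum_dist p q = norm (fst p - fst q) + norm (snd p - snd q)"

definition lip_like_prod ::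
  "('a::real_normed_vector \<times> 'b::real_normed_vector \<Rightarrow> 'c::real_normed_vector set)
    \<Rightarrow> 'a \<times> 'b \<Rightarrow> 'c \<Rightarrow> real \<Rightarrow> bool" where
  "lip_like_prod T pb cb L \<longleftrightarrow>
     (\<exists>U V. open U \<and> pb \<in> U \<and> open V \<and> cb \<in> V \<and>
        (\<forall>p\<in>U. \<forall>q\<in>U. T p \<inter> V \<subseteq> (\<Union>c\<in>T q. cball c (L * sum_dist p q))))"

definition lip_prod ::
  "('a::real_normed_vector \<times> 'b::real_normed_vector \<Rightarrow> 'c::real_normed_vector set)
    \<Rightarrow> 'a \<times> 'b \<Rightarrow> 'c \<Rightarrow> real" where
  "lip_prod T pb cb = Inf {L. L \<ge> 0 \<and> lip_like_prod T pb cb L}"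

definition lip_fun :: "('a::metric_space \<Rightarrow> 'b::metric_space) \<Rightarrow> 'a \<Rightarrow> real" where
  "lip_fun g wb = Inf {L. \<exists>U. open U \<and> wb \<in> U \<and> L-lipschitz_on U g}"

end

theory Submission
  imports Defs
begin

lemma infdist_lessE:
  assumes "A \<noteq> {}" "infdist x A < r"
  shows "\<exists>a\<in>A. dist x a < r"
proof -
  have "bdd_below ((\<lambda>a. dist x a) ` A)"
    by (rule bdd_belowI[where m=0]) auto
  then show ?thesis using assms by (simp add: infdist_notempty cINF_less_iff)
qed

lemma main_aux:
  fixes F :: "'x::real_normed_vector \<Rightarrow> 'y::real_normed_vector \<Rightarrow> 'z::real_normed_vector set"
    and g :: "'w::real_normed_vector \<Rightarrow> 'z"
    and \<Gamma> :: "'y \<times> 'w \<Rightarrow> 'x set"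
  assumes G: "\<And>y w. \<Gamma> (y, w) = {x. - g w \<in> F x y}"
    and zb_def: "zb = - g wb"
    and eta: "eta \<ge> 0" "lip_like_y F xb yb zb eta"
    and k: "k \<ge> 0" "metreg_x F xb yb zb k"
    and lg: "open Ug" "wb \<in> Ug" "lam-lipschitz_on Ug g"
  shows "\<exists>\<alpha>>0. \<forall>y w y' w'. y \<in> cball yb \<alpha> \<and> y' \<in> cball yb \<alpha> \<and> w \<in> cball wb \<alpha> \<and> w' \<in> cball wb \<alpha> \<longrightarrow>
            (\<forall>\<epsilon>>0. \<Gamma> (y', w') \<inter> cball xb \<alpha> \<subseteq>
               (\<Union>x\<in>\<Gamma> (y, w). cball x ((k + \<epsilon>) * (eta * norm (y - y') + lam * norm (w - w')))))"
proof -
  obtain U1 V1 W1 where U1: "open U1" "xb \<in> U1" "open V1" "yb \<in> V1" "open W1" "zb \<in> W1"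
    and mr: "\<And>x y z. x\<in>U1 \<Longrightarrow> y\<in>V1 \<Longrightarrow> z\<in>W1 \<Longrightarrow> F x y \<noteq> {} \<Longrightarrow>
            ({u. z \<in> F u y} \<noteq> {} \<and> infdist x {u. z \<in> F u y} \<le> k * infdist z (F x y))"
    using k(2) unfolding metreg_x_def by metis
  obtain U2 V2 W2 where U2: "open U2" "xb \<in> U2" "open V2" "yb \<in> V2" "open W2" "zb \<in> W2"
    and ll: "\<And>x y y'. x\<in>U2 \<Longrightarrow> y\<in>V2 \<Longrightarrow> y'\<in>V2 \<Longrightarrow>
          F x y \<inter> W2 \<subseteq> (\<Union>z\<in>F x y'. cball z (eta * norm (y - y')))"
    using eta(2) unfolding lip_like_y_def by metis
  have lam0: "lam \<ge> 0" using lg(3) lipschitz_on_nonneg by blast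
  obtain a1 where a1: "a1 > 0" "cball xb a1 \<subseteq> U1 \<inter> U2"
    using U1 U2 open_contains_cball[of "U1 \<inter> U2"] by blast
  obtain a2 where a2: "a2 > 0" "cball yb a2 \<subseteq> V1 \<inter> V2"
    using U1 U2 open_contains_cball[of "V1 \<inter> V2"] by blast
  obtain a3 where a3: "a3 > 0" "cball wb a3 \<subseteq> Ug"
    using lg open_contains_cball[of Ug] by blast
  obtain d where d: "d > 0" "cball zb d \<subseteq> W1 \<inter> W2"
    using U1 U2 open_contains_cball[of "W1 \<inter> W2"] by blast
  define \<alpha> where "\<alpha> = min a1 (min a2 (min a3 (d / (lam + 1))))"
  have apos: "\<alpha> > 0" unfolding \<alpha>_def using a1 a2 a3 d lam0 by auto
  have "lam * \<alpha> \<le> lam * (d / (lam + 1))"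
    unfolding \<alpha>_def using lam0 by (intro mult_left_mono) auto
  also have "\<dots> \<le> d" using lam0 d by (simp add: field_simps)
  finally have lama: "lam * \<alpha> \<le> d" .
  have gW: "- g w \<in> W1 \<inter> W2" if "w \<in> cball wb \<alpha>" for w
  proof -
    have wU: "w \<in> Ug" using that a3 unfolding \<alpha>_def by auto
    have "dist (g w) (g wb) \<le> lam * dist w wb" using lipschitz_onD[OF lg(3) wU lg(2)] .
    also have "\<dots> \<le> lam * \<alpha>" using that lam0 by (intro mult_left_mono) (auto simp: dist_commute)
    finally have "dist zb (- g w) \<le> d" using lama unfolding zb_def
      by (simp add: dist_norm norm_minus_commute algebra_simps)
    then show ?thesis using d by auto
  qed
  show ?thesis
  proof (intro exI[of _ \<alpha>] conjI apos allI impI subsetI)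
    fix y w y' w' and \<epsilon> :: real and x'
    assume yw: "y \<in> cball yb \<alpha> \<and> y' \<in> cball yb \<alpha> \<and> w \<in> cball wb \<alpha> \<and> w' \<in> cball wb \<alpha>"
      and eps: "\<epsilon> > 0" and x': "x' \<in> \<Gamma> (y', w') \<inter> cball xb \<alpha>"
    define R where "R = eta * norm (y - y') + lam * norm (w - w')"
    have R0: "R \<ge> 0" unfolding R_def using eta lam0 by simp
    have xU: "x' \<in> U1" "x' \<in> U2" using x' a1 unfolding \<alpha>_def by auto
    have yV: "y \<in> V1" "y \<in> V2" "y' \<in> V1" "y' \<in> V2" using yw a2 unfolding \<alpha>_def by auto
    have wU: "w \<in> Ug" "w' \<in> Ug" using yw a3 unfolding \<alpha>_def by auto
    have "x' \<in> \<Gamma> (y', w')" using x' by blast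
    then have z'F: "- g w' \<in> F x' y'" by (simp add: G)
    have w'c: "w' \<in> cball wb \<alpha>" and wc: "w \<in> cball wb \<alpha>" using yw by blast+
    have "- g w' \<in> W2" using gW[OF w'c] by blast
    with z'F have "- g w' \<in> F x' y' \<inter> W2" by blast
    then have "- g w' \<in> (\<Union>z\<in>F x' y. cball z (eta * norm (y' - y)))"
      using ll[OF xU(2) yV(4) yV(2)] by blast
    then obtain v where v1: "v \<in> F x' y" and v2: "- g w' \<in> cball v (eta * norm (y' - y))"
      by blast
    have v3: "dist (- g w') v \<le> eta * norm (y - y')"
      using v2 by (simp add: dist_commute norm_minus_commute)
    have dgw: "dist (g w) (g w') \<le> lam * dist w w'" using lipschitz_onD[OF lg(3) wU] .
    have dgw2: "dist (- g w) (- g w') \<le> lam * norm (w - w')"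
      using dgw by (metis dist_minus dist_norm)
    have "dist (- g w) v \<le> dist (- g w) (- g w') + dist (- g w') v" by (rule dist_triangle)
    also have "\<dots> \<le> R" using v3 dgw2 unfolding R_def by linarith
    finally have dv: "dist (- g w) v \<le> R" .
    have gwW: "- g w \<in> W1" using gW[OF wc] by blast
    have Fne: "F x' y \<noteq> {}" using v1 by blast
    have mr': "{u. - g w \<in> F u y} \<noteq> {} \<and> infdist x' {u. - g w \<in> F u y} \<le> k * infdist (- g w) (F x' y)"
      using mr[OF xU(1) yV(1) gwW Fne] .
    show "x' \<in> (\<Union>x\<in>\<Gamma> (y, w). cball x ((k + \<epsilon>) * (eta * norm (y - y') + lam * norm (w - w'))))"
    proof (cases "R = 0")
      case True
      have "dist (- g w) v \<le> 0" using dv True by simp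
      then have "- g w = v" by simp
      then have "- g w \<in> F x' y" using v1 by simp
      then have "x' \<in> \<Gamma> (y, w)" by (simp add: G)
      have "x' \<in> cball x' ((k + \<epsilon>) * (eta * norm (y - y') + lam * norm (w - w')))"
        using True unfolding R_def by (simp only: mult_zero_right centre_in_cball order_refl)
      with \<open>x' \<in> \<Gamma> (y, w)\<close> show ?thesis by blast
    next
      case False
      then have Rp: "R > 0" using R0 by simp
      have "infdist (- g w) (F x' y) \<le> R" using infdist_le[OF v1, of "- g w"] dv by linarith
      then have "k * infdist (- g w) (F x' y) \<le> k * R" by (rule mult_left_mono[OF _ k(1)])
      also have "\<dots> < (k + \<epsilon>) * R" using eps Rp by (simp add: algebra_simps)
      finally have "infdist x' {u. - g w \<in> F u y} < (k + \<epsilon>) * R" using mr' by linarith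
      then obtain x where xx: "x \<in> {u. - g w \<in> F u y}" "dist x' x < (k + \<epsilon>) * R"
        using infdist_lessE[of "{u. - g w \<in> F u y}" x' "(k + \<epsilon>) * R"] mr' by auto
      have xG: "x \<in> \<Gamma> (y, w)" using xx(1) G by simp
      have "x' \<in> cball x ((k + \<epsilon>) * (eta * norm (y - y') + lam * norm (w - w')))"
        using xx(2) unfolding R_def by (simp add: dist_commute)
      with xG show ?thesis by blast
    qed
  qed
qed


lemma Gamma_simp:
  fixes A :: "'z::ab_group_add set"
  shows "0 \<in> (\<lambda>v. v + c) ` A \<longleftrightarrow> - c \<in> A"
proof
  assume "0 \<in> (\<lambda>v. v + c) ` A"
  then obtain v where "v \<in> A" "0 = v + c" by blast
  then have "v = - c" by (metis eq_neg_iff_add_eq_0)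
  then show "- c \<in> A" using \<open>v \<in> A\<close> by simp
next
  assume "- c \<in> A"
  then show "0 \<in> (\<lambda>v. v + c) ` A" by (rule rev_image_eqI) simp
qed

lemma lin_bound:
  fixes a b eta lam :: real
  assumes "a \<ge> 0" "b \<ge> 0"
  shows "eta * a + lam * b \<le> max eta lam * (a + b)"
proof -
  have "eta * a \<le> max eta lam * a" using assms by (intro mult_right_mono) auto
  moreover have "lam * b \<le> max eta lam * b" using assms by (intro mult_right_mono) auto
  ultimately show ?thesis by (simp add: distrib_left)
qed

lemma prod_from_main:
  fixes \<Gamma> :: "'y::real_normed_vector \<times> 'w::real_normed_vector \<Rightarrow> 'x::real_normed_vector set"
  assumes c: "k + e \<ge> 0"
    and H: "\<alpha> > 0" "\<forall>y w y' w'. y \<in> cball yb \<alpha> \<and> y' \<in> cball yb \<alpha> \<and> w \<in> cball wb \<alpha> \<and> w' \<in> cball wb \<alpha> \<longrightarrow>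
            (\<forall>\<epsilon>>0. \<Gamma> (y', w') \<inter> cball xb \<alpha> \<subseteq>
               (\<Union>x\<in>\<Gamma> (y, w). cball x ((k + \<epsilon>) * (eta * norm (y - y') + lam * norm (w - w')))))"
    and e: "e > 0"
  shows "lip_like_prod \<Gamma> (yb, wb) xb ((k + e) * max eta lam)"
  unfolding lip_like_prod_def
proof (intro exI[of _ "ball yb \<alpha> \<times> ball wb \<alpha>"] exI[of _ "ball xb \<alpha>"] conjI ballI subsetI)
  show "open (ball yb \<alpha> \<times> ball wb \<alpha>)" by (intro open_Times) auto
  show "(yb, wb) \<in> ball yb \<alpha> \<times> ball wb \<alpha>" using H(1) by auto
  show "open (ball xb \<alpha>)" by simp
  show "xb \<in> ball xb \<alpha>" using H(1) by simp
  fix p q x'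
  assume p: "p \<in> ball yb \<alpha> \<times> ball wb \<alpha>" and q: "q \<in> ball yb \<alpha> \<times> ball wb \<alpha>"
    and x': "x' \<in> \<Gamma> p \<inter> ball xb \<alpha>"
  obtain y' w' where pe: "p = (y', w')" by (cases p)
  obtain y w where qe: "q = (y, w)" by (cases q)
  have cb: "y \<in> cball yb \<alpha> \<and> y' \<in> cball yb \<alpha> \<and> w \<in> cball wb \<alpha> \<and> w' \<in> cball wb \<alpha>"
    using p q pe qe by auto
  have "x' \<in> \<Gamma> (y', w') \<inter> cball xb \<alpha>" using x' pe by auto
  then have "x' \<in> (\<Union>x\<in>\<Gamma> (y, w). cball x ((k + e) * (eta * norm (y - y') + lam * norm (w - w'))))"
    using H(2) cb e by blast
  then obtain x where xG: "x \<in> \<Gamma> (y, w)"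
    and dx: "dist x x' \<le> (k + e) * (eta * norm (y - y') + lam * norm (w - w'))" by auto
  have "eta * norm (y - y') + lam * norm (w - w') \<le> max eta lam * (norm (y' - y) + norm (w' - w))"
    using lin_bound[of "norm (y - y')" "norm (w - w')" eta lam]
    by (simp add: norm_minus_commute)
  then have "(k + e) * (eta * norm (y - y') + lam * norm (w - w')) \<le> (k + e) * max eta lam * sum_dist p q"
    unfolding sum_dist_def pe qe using c by (simp add: mult.assoc mult_left_mono)
  then have "x' \<in> cball x ((k + e) * max eta lam * sum_dist p q)" using dx by simp
  then show "x' \<in> (\<Union>c\<in>\<Gamma> q. cball c ((k + e) * max eta lam * sum_dist p q))"
    using xG qe by blast
qed

theorem proposition4p1:
  fixes F :: "'x::banach \<Rightarrow> 'y::banach \<Rightarrow> 'z::banach set"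
    and g :: "'w::banach \<Rightarrow> 'z"
    and xb :: 'x and yb :: 'y and zb :: 'z and wb :: 'w
    and \<Gamma> :: "'y \<times> 'w \<Rightarrow> 'x set"
    and eta k lam :: real
  assumes zb_def: "zb = - g wb"
    and zb_in: "zb \<in> F xb yb"
    and Gamma_def: "\<And>y w. \<Gamma> (y, w) = {x. 0 \<in> (\<lambda>v. v + g w) ` F x y}"
    and eta: "eta \<ge> 0" "lip_like_y F xb yb zb eta"
    and k: "k > 0" "metreg_x F xb yb zb k"
    and isc: "\<exists>V. open V \<and> yb \<in> V \<and> (\<forall>y\<in>V. inner_sc (\<lambda>x. F x y) xb zb)"
    and lam: "\<exists>U. open U \<and> wb \<in> U \<and> lam-lipschitz_on U g"
  shows "(\<exists>\<alpha>>0. \<forall>y w y' w'. y \<in> cball yb \<alpha> \<and> y' \<in> cball yb \<alpha> \<and> w \<in> cball wb \<alpha> \<and> w' \<in> cball wb \<alpha> \<longrightarrow>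
            (\<forall>\<epsilon>>0. \<Gamma> (y', w') \<inter> cball xb \<alpha> \<subseteq>
               (\<Union>x\<in>\<Gamma> (y, w). cball x ((k + \<epsilon>) * (eta * norm (y - y') + lam * norm (w - w'))))))
         \<and> (\<exists>L\<ge>0. lip_like_prod \<Gamma> (yb, wb) xb L)
         \<and> lip_prod \<Gamma> (yb, wb) xb \<le>
           reg_hat_x F xb yb zb * max (lip_hat_y F xb yb zb) (lip_fun g wb)"
proof -
  have G: "\<Gamma> (y, w) = {x. - g w \<in> F x y}" for y w
    unfolding Gamma_def using Gamma_simp[of "g w"] by blast
  obtain Ug where Ug: "open Ug" "wb \<in> Ug" "lam-lipschitz_on Ug g" using lam by blast
  have P1: "\<exists>\<alpha>>0. \<forall>y w y' w'. y \<in> cball yb \<alpha> \<and> y' \<in> cball yb \<alpha> \<and> w \<in> cball wb \<alpha> \<and> w' \<in> cball wb \<alpha> \<longrightarrow>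
            (\<forall>\<epsilon>>0. \<Gamma> (y', w') \<inter> cball xb \<alpha> \<subseteq>
               (\<Union>x\<in>\<Gamma> (y, w). cball x ((k + \<epsilon>) * (eta * norm (y - y') + lam * norm (w - w')))))"
    using main_aux[OF G zb_def eta(1) eta(2) _ k(2) Ug] k(1) by simp
  have lam0: "lam \<ge> 0" using Ug(3) lipschitz_on_nonneg by blast
  have P2: "\<exists>L\<ge>0. lip_like_prod \<Gamma> (yb, wb) xb L"
  proof -
    obtain \<alpha> where "\<alpha> > 0" and H: "\<forall>y w y' w'. y \<in> cball yb \<alpha> \<and> y' \<in> cball yb \<alpha> \<and> w \<in> cball wb \<alpha> \<and> w' \<in> cball wb \<alpha> \<longrightarrow>
            (\<forall>\<epsilon>>0. \<Gamma> (y', w') \<inter> cball xb \<alpha> \<subseteq>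
               (\<Union>x\<in>\<Gamma> (y, w). cball x ((k + \<epsilon>) * (eta * norm (y - y') + lam * norm (w - w')))))"
      using P1 by blast
    have "lip_like_prod \<Gamma> (yb, wb) xb ((k + 1) * max eta lam)"
      by (rule prod_from_main[OF _ \<open>\<alpha> > 0\<close> H]) (use k(1) in auto)
    moreover have "(k + 1) * max eta lam \<ge> 0" using k(1) eta(1) by simp
    ultimately show ?thesis by blast
  qed
  define SK where "SK = {L. L \<ge> 0 \<and> metreg_x F xb yb zb L}"
  define SE where "SE = {L. L \<ge> 0 \<and> lip_like_y F xb yb zb L}"
  define SG where "SG = {L. \<exists>U. open U \<and> wb \<in> U \<and> L-lipschitz_on U g}"
  define SP where "SP = {L. L \<ge> 0 \<and> lip_like_prod \<Gamma> (yb, wb) xb L}"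
  define r where "r = reg_hat_x F xb yb zb"
  define m where "m = max (lip_hat_y F xb yb zb) (lip_fun g wb)"
  have bK: "bdd_below SK" unfolding SK_def by (rule bdd_belowI[where m=0]) auto
  have bE: "bdd_below SE" unfolding SE_def by (rule bdd_belowI[where m=0]) auto
  have bG: "bdd_below SG" unfolding SG_def
    by (rule bdd_belowI[where m=0]) (auto dest: lipschitz_on_nonneg)
  have bP: "bdd_below SP" unfolding SP_def by (rule bdd_belowI[where m=0]) auto
  have nK: "SK \<noteq> {}" unfolding SK_def using k less_imp_le by blast
  have nE: "SE \<noteq> {}" unfolding SE_def using eta by auto
  have nG: "SG \<noteq> {}" unfolding SG_def using Ug by auto
  have nP: "SP \<noteq> {}" unfolding SP_def using P2 by auto
  have r0: "r \<ge> 0" unfolding r_def reg_hat_x_def using nK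
    by (intro cInf_greatest) (auto simp: SK_def)
  have e0: "lip_hat_y F xb yb zb \<ge> 0" unfolding lip_hat_y_def using nE
    by (intro cInf_greatest) (auto simp: SE_def)
  have m0: "m \<ge> 0" unfolding m_def using e0 by simp
  have approx: "\<exists>L\<in>SP. L < r * m + \<delta>" if dpos: "\<delta> > 0" for \<delta>
  proof -
    define t where "t = min 1 (\<delta> / (r + 2 * m + 3))"
    have tpos: "t > 0" unfolding t_def using dpos r0 m0 by simp
    have t1: "t \<le> 1" unfolding t_def by simp
    have cpos: "r + 2 * m + 3 > 0" using r0 m0 by simp
    have "t \<le> \<delta> / (r + 2 * m + 3)" unfolding t_def by simp
    then have "t * (r + 2 * m + 3) \<le> \<delta> / (r + 2 * m + 3) * (r + 2 * m + 3)"
      using cpos by (intro mult_right_mono) auto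
    then have tle: "t * (r + 2 * m + 3) \<le> \<delta>" using cpos by simp
    have "Inf SK < r + t" using tpos unfolding r_def reg_hat_x_def SK_def by simp
    then obtain k0 where k0: "k0 \<in> SK" "k0 < r + t" using cInf_less_iff[OF nK bK] by blast
    have "Inf SE < lip_hat_y F xb yb zb + t" using tpos unfolding lip_hat_y_def SE_def by simp
    then obtain e1 where e1: "e1 \<in> SE" "e1 < lip_hat_y F xb yb zb + t"
      using cInf_less_iff[OF nE bE] by blast
    have "Inf SG < lip_fun g wb + t" using tpos unfolding lip_fun_def SG_def by simp
    then obtain l1 where l1: "l1 \<in> SG" "l1 < lip_fun g wb + t"
      using cInf_less_iff[OF nG bG] by blast
    obtain U1 where U1: "open U1" "wb \<in> U1" "l1-lipschitz_on U1 g" using l1 unfolding SG_def by blast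
    have k00: "k0 \<ge> 0" "metreg_x F xb yb zb k0" using k0 unfolding SK_def by auto
    have e10: "e1 \<ge> 0" "lip_like_y F xb yb zb e1" using e1 unfolding SE_def by auto
    have l10: "l1 \<ge> 0" using U1(3) lipschitz_on_nonneg by blast
    obtain \<alpha> where "\<alpha> > 0" and H: "\<forall>y w y' w'. y \<in> cball yb \<alpha> \<and> y' \<in> cball yb \<alpha> \<and> w \<in> cball wb \<alpha> \<and> w' \<in> cball wb \<alpha> \<longrightarrow>
            (\<forall>\<epsilon>>0. \<Gamma> (y', w') \<inter> cball xb \<alpha> \<subseteq>
               (\<Union>x\<in>\<Gamma> (y, w). cball x ((k0 + \<epsilon>) * (e1 * norm (y - y') + l1 * norm (w - w')))))"
      using main_aux[OF G zb_def e10(1) e10(2) k00(1) k00(2) U1] by blast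
    have LP: "lip_like_prod \<Gamma> (yb, wb) xb ((k0 + t) * max e1 l1)"
      by (rule prod_from_main[OF _ \<open>\<alpha> > 0\<close> H]) (use k00(1) tpos in auto)
    have L0: "(k0 + t) * max e1 l1 \<ge> 0" using k00(1) tpos e10(1) by simp
    have mx: "max e1 l1 \<le> m + t" unfolding m_def using e1(2) l1(2) by auto
    have "(k0 + t) * max e1 l1 \<le> (r + 2 * t) * (m + t)"
      using k0(2) mx k00(1) tpos L0 e10(1) by (intro mult_mono) auto
    also have "\<dots> = r * m + t * (r + 2 * m + 2 * t)" by (simp add: algebra_simps)
    also have "\<dots> < r * m + \<delta>"
    proof -
      have "t * (r + 2 * m + 2 * t) < t * (r + 2 * m + 3)"
        using tpos t1 by (intro mult_strict_left_mono) auto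
      then show ?thesis using tle by linarith
    qed
    finally show ?thesis using LP L0 unfolding SP_def by blast
  qed
  have P3: "Inf SP \<le> r * m"
  proof (rule ccontr)
    assume "\<not> Inf SP \<le> r * m"
    then have "Inf SP - r * m > 0" by simp
    then obtain L where "L \<in> SP" "L < r * m + (Inf SP - r * m)" using approx by blast
    moreover have "Inf SP \<le> L" using cInf_lower[OF \<open>L \<in> SP\<close> bP] .
    ultimately show False by simp
  qed
  show ?thesis
    using P1 P2 P3 unfolding SP_def r_def m_def lip_prod_def by blast
qed

end
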